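(* Assume $\gamma=0$ and $L$ is not conformal. Let $M$ be a simple $L$-module; if $o(r)=n<\infty$ assume that the central element $\tilde\phi(h^n)$ acts on $M$ as a nonzero scalar. If $\operatorname{ann}M$ contains a power of $u$ or a power of $d$, then $M$ is finite-dimensional.
   Context: Let $r,s\in\mathbb C^\times$, $\phi(x)=\sum_ia_ix^i$, and $L=L(\phi,r,s,0)$ the associative $\mathbb C$-algebra generated by $u,d,h$ with $hu=ruh$, $dh=rhd$, $du-sud=\phi(h)$. $L$ is not conformal means there is no $\psi\in\mathbb C[x]$ with $s\psi(x)-\psi(rx)=\phi(x)$; equivalently $s=r^i$ and $a_i\neq0$ for some $i$. When $o(r)=n<\infty$ fix $j$ with $s=r^j$, $0\le j\le n-1$, and write $\sum_{i\equiv j\ (\mathrm{mod}\ n)}a_ih^i=sh^j\tilde\phi(h^n)$ for a polynomial $\tilde\phi$; then $h^n$ and hence $\tilde\phi(h^n)$ are central in $L$. $o(r)$ is the multiplicative order of $r$. Modules are left modules. *)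

theory Defs
  imports Main "HOL-Computational_Algebra.Polynomial"
begin

definition op_poly :: "(complex \<Rightarrow> 'm \<Rightarrow> 'm) \<Rightarrow> complex poly \<Rightarrow> ('m \<Rightarrow> 'm) \<Rightarrow> 'm \<Rightarrow> 'm::ab_group_add"
  where "op_poly scale p H x = (\<Sum>i\<le>degree p. scale (coeff p i) ((H ^^ i) x))"

text \<open>M is a module over L(phi,r,s,0): the generators u, d, h act by linear
  operators U, D, H satisfying the defining relations
  hu = r uh, dh = r hd, du - s ud = phi(h).\<close>
definition is_L_module ::
  "(complex \<Rightarrow> 'm \<Rightarrow> 'm) \<Rightarrow> complex poly \<Rightarrow> complex \<Rightarrow> complex \<Rightarrow>
     ('m \<Rightarrow> 'm) \<Rightarrow> ('m \<Rightarrow> 'm) \<Rightarrow> ('m \<Rightarrow> 'm::ab_group_add) \<Rightarrow> bool"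
  where "is_L_module scale phi r s U D H \<longleftrightarrow>
    vector_space scale \<and>
    Vector_Spaces.linear scale scale U \<and> Vector_Spaces.linear scale scale D \<and>
    Vector_Spaces.linear scale scale H \<and>
    (\<forall>x. H (U x) = scale r (U (H x))) \<and>
    (\<forall>x. D (H x) = scale r (H (D x))) \<and>
    (\<forall>x. D (U x) - scale s (U (D x)) = op_poly scale phi H x)"

definition is_simple_L_module ::
  "(complex \<Rightarrow> 'm \<Rightarrow> 'm) \<Rightarrow> complex poly \<Rightarrow> complex \<Rightarrow> complex \<Rightarrow>
     ('m \<Rightarrow> 'm) \<Rightarrow> ('m \<Rightarrow> 'm) \<Rightarrow> ('m \<Rightarrow> 'm::ab_group_add) \<Rightarrow> bool"
  where "is_simple_L_module scale phi r s U D H \<longleftrightarrow>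
    is_L_module scale phi r s U D H \<and> (UNIV :: 'm set) \<noteq> {0} \<and>
    (\<forall>W. module.subspace scale W \<and> U ` W \<subseteq> W \<and> D ` W \<subseteq> W \<and> H ` W \<subseteq> W
          \<longrightarrow> W = {0} \<or> W = UNIV)"

definition conformal :: "complex poly \<Rightarrow> complex \<Rightarrow> complex \<Rightarrow> bool"
  where "conformal phi r s \<longleftrightarrow> (\<exists>psi. smult s psi - psi \<circ>\<^sub>p [:0, r:] = phi)"

definition mult_order_is :: "complex \<Rightarrow> nat \<Rightarrow> bool"
  where "mult_order_is r n \<longleftrightarrow> 0 < n \<and> r ^ n = 1 \<and> (\<forall>m. 0 < m \<and> m < n \<longrightarrow> r ^ m \<noteq> 1)"

text \<open>phi tilde: sum over i = j mod n of a_i h^i = s h^j phitilde(h^n),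
  i.e. coeff phitilde k = a_(j+kn) / s.\<close>
definition phitilde :: "complex poly \<Rightarrow> complex \<Rightarrow> nat \<Rightarrow> nat \<Rightarrow> complex poly"
  where "phitilde phi s n j = (\<Sum>k\<le>degree phi. monom (coeff phi (j + k * n) / s) k)"

definition fin_dim :: "(complex \<Rightarrow> 'm \<Rightarrow> 'm::ab_group_add) \<Rightarrow> bool"
  where "fin_dim scale \<longleftrightarrow> (\<exists>S. finite S \<and> module.span scale S = UNIV)"

end

theory Submission
  imports Defs "HOL-Computational_Algebra.Fundamental_Theorem_Algebra"
begin

lemma lin_funpow:
  assumes "Vector_Spaces.linear s s f"
  shows "Vector_Spaces.linear s s (f ^^ n)"
proof (induction n)
  case 0
  have "vector_space s" using assms by (simp add: Vector_Spaces.linear_iff)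
  then show ?case by (simp add: Vector_Spaces.linear_iff id_def)
next
  case (Suc n)
  then show ?case using Vector_Spaces.linear_compose[OF Suc assms] by (simp add: comp_def)
qed

locale Lgen = vector_space scale for scale :: "complex \<Rightarrow> 'm::ab_group_add \<Rightarrow> 'm" +
  fixes X Y H :: "'m \<Rightarrow> 'm" and rho sigma :: complex and psi :: "complex poly"
  assumes linX: "Vector_Spaces.linear scale scale X"
    and linY: "Vector_Spaces.linear scale scale Y"
    and linH: "Vector_Spaces.linear scale scale H"
    and relHX: "\<And>x. H (X x) = scale rho (X (H x))"
    and relYX: "\<And>x. Y (X x) = scale sigma (X (Y x)) + op_poly scale psi H x"
    and relYH: "\<And>x. Y (H x) = scale rho (H (Y x))"
    and rho0: "rho \<noteq> 0" and sigma0: "sigma \<noteq> 0"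
begin

interpretation X: Vector_Spaces.linear scale scale X by (rule linX)
interpretation Y: Vector_Spaces.linear scale scale Y by (rule linY)
interpretation H: Vector_Spaces.linear scale scale H by (rule linH)

lemma Hp_lin: "Vector_Spaces.linear scale scale (H ^^ i)" by (rule lin_funpow[OF linH])

lemma Hp_add: "(H ^^ i) (x + y) = (H ^^ i) x + (H ^^ i) y"
  using Hp_lin[of i] by (simp add: Vector_Spaces.linear_iff)
lemma Hp_scale: "(H ^^ i) (scale c x) = scale c ((H ^^ i) x)"
  using Hp_lin[of i] by (simp add: Vector_Spaces.linear_iff)
lemma Hp_zero: "(H ^^ i) 0 = 0"
  by (metis Hp_scale scale_zero_left)

lemma Xp_lin: "Vector_Spaces.linear scale scale (X ^^ i)" by (rule lin_funpow[OF linX])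
lemma Xp_scale: "(X ^^ i) (scale c x) = scale c ((X ^^ i) x)"
  using Xp_lin[of i] by (simp add: Vector_Spaces.linear_iff)
lemma Xp_add: "(X ^^ i) (x + y) = (X ^^ i) x + (X ^^ i) y"
  using Xp_lin[of i] by (simp add: Vector_Spaces.linear_iff)

definition opc :: "(nat \<Rightarrow> complex) \<Rightarrow> nat \<Rightarrow> 'm \<Rightarrow> 'm" where
  "opc a N x = (\<Sum>i\<le>N. scale (a i) ((H ^^ i) x))"

lemma op_poly_opc:
  assumes "degree p \<le> N"
  shows "op_poly scale p H x = opc (coeff p) N x"
  unfolding op_poly_def opc_def
  by (rule sum.mono_neutral_left) (use assms in \<open>auto simp: coeff_eq_0\<close>)

lemma opc_lin: "opc (\<lambda>i. c * f i + g i) N x = scale c (opc f N x) + opc g N x"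
  unfolding opc_def by (simp add: scale_left_distrib sum.distrib scale_sum_right)

lemma op_poly_add: "op_poly scale (p + q) H x = op_poly scale p H x + op_poly scale q H x"
proof -
  define N where "N = max (degree p) (degree q)"
  have "degree (p + q) \<le> N" unfolding N_def by (rule degree_add_le_max)
  then show ?thesis
    using op_poly_opc[of p N] op_poly_opc[of q N] op_poly_opc[of "p+q" N] opc_lin[of 1 "coeff p" "coeff q" N x]
    unfolding N_def by (simp add: coeff_add[abs_def])
qed

lemma op_poly_smult: "op_poly scale (smult c p) H x = scale c (op_poly scale p H x)"
  using op_poly_opc[of p "degree p"] op_poly_opc[of "smult c p" "degree p"]
    opc_lin[of c "coeff p" "\<lambda>_. 0" "degree p" x]
  by (simp add: degree_smult_le opc_def)

lemma op_poly_pCons0: "op_poly scale (pCons 0 q) H x = H (op_poly scale q H x)"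
proof -
  have "op_poly scale (pCons 0 q) H x = opc (coeff (pCons 0 q)) (Suc (degree q)) x"
    by (rule op_poly_opc) (simp add: degree_pCons_le)
  also have "\<dots> = (\<Sum>i\<le>degree q. scale (coeff q i) (H ((H ^^ i) x)))"
    unfolding opc_def by (subst sum.atMost_Suc_shift) simp
  also have "\<dots> = H (op_poly scale q H x)"
    unfolding op_poly_def by (simp add: H.sum H.scale)
  finally show ?thesis .
qed

lemma op_poly_const: "op_poly scale [:c:] H x = scale c x"
  unfolding op_poly_def by simp

lemma op_poly_lin_factor:
  "op_poly scale ([:-z, 1:] * q) H x = H (op_poly scale q H x) - scale z (op_poly scale q H x)"
proof -
  have e: "[:-z, 1:] * q = pCons 0 q + smult (-z) q" by simp
  show ?thesis unfolding e op_poly_add op_poly_smult op_poly_pCons0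
    by (simp add: scale_minus_left)
qed


lemma X_kill_H: "X y = 0 \<Longrightarrow> X (H y) = 0"
  using relHX[of y] rho0 by (simp add: H.zero)

lemma X_kill_Hp: "X w = 0 \<Longrightarrow> X ((H ^^ i) w) = 0"
  by (induction i) (auto intro: X_kill_H)

lemma X_kill_op: "X w = 0 \<Longrightarrow> X (op_poly scale p H w) = 0"
  unfolding op_poly_def by (simp add: X.sum X.scale X_kill_Hp)

lemma eigen_exists:
  "p \<noteq> 0 \<Longrightarrow> X w = 0 \<Longrightarrow> w \<noteq> 0 \<Longrightarrow> op_poly scale p H w = 0 \<Longrightarrow>
    \<exists>v \<mu>. v \<noteq> 0 \<and> X v = 0 \<and> H v = scale \<mu> v"
proof (induction "degree p" arbitrary: p rule: less_induct)
  case less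
  show ?case
  proof (cases "degree p = 0")
    case True
    then obtain c where pc: "p = [:c:]" by (metis degree_eq_zeroE)
    with less.prems have "c \<noteq> 0" by auto
    with less.prems show ?thesis unfolding pc op_poly_const by simp
  next
    case False
    then have "\<not> constant (poly p)" by (simp add: constant_degree)
    then obtain z where "poly p z = 0" using fundamental_theorem_of_algebra by blast
    then have "[:-z, 1:] dvd p" by (simp add: poly_eq_0_iff_dvd)
    then obtain q where pq: "p = [:-z, 1:] * q" by (elim dvdE)
    with less.prems have q0: "q \<noteq> 0" by auto
    have dq: "degree p = degree q + 1" unfolding pq using q0 by (subst degree_mult_eq) auto
    define w' where "w' = op_poly scale q H w"
    have Xw': "X w' = 0" unfolding w'_def using less.prems by (simp add: X_kill_op)
    show ?thesis
    proof (cases "w' = 0")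
      case True
      then show ?thesis using less.hyps[of q] dq q0 less.prems unfolding w'_def by auto
    next
      case False
      have "H w' - scale z w' = 0" using less.prems(4) unfolding pq op_poly_lin_factor w'_def .
      then have "H w' = scale z w'" by simp
      then show ?thesis using False Xw' by blast
    qed
  qed
qed

lemma HX_comm: "(H ^^ i) (X x) = scale (rho ^ i) (X ((H ^^ i) x))"
proof (induction i)
  case 0 then show ?case by simp
next
  case (Suc i)
  have "(H ^^ Suc i) (X x) = H (scale (rho ^ i) (X ((H ^^ i) x)))" using Suc by simp
  also have "\<dots> = scale (rho ^ i) (scale rho (X (H ((H ^^ i) x))))" by (simp add: H.scale relHX)
  also have "\<dots> = scale (rho ^ Suc i) (X ((H ^^ Suc i) x))" by (simp add: mult.commute)
  finally show ?case .
qed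

lemma XH_comm: "X ((H ^^ i) x) = scale (inverse (rho ^ i)) ((H ^^ i) (X x))"
  using HX_comm[of i x] rho0 by simp

lemma X_opc: "X (opc a N x) = opc (\<lambda>i. a i * inverse (rho ^ i)) N (X x)"
  unfolding opc_def by (simp add: X.sum X.scale XH_comm)

definition cc :: "nat \<Rightarrow> nat \<Rightarrow> complex" where
  "cc j i = coeff psi i * (\<Sum>l<j. (sigma * inverse (rho ^ i)) ^ l)"

lemma Yformula:
  "Y ((X ^^ Suc j) z) = scale (sigma ^ Suc j) ((X ^^ Suc j) (Y z)) + opc (cc (Suc j)) (degree psi) ((X ^^ j) z)"
proof (induction j)
  case 0
  show ?case using relYX[of z] op_poly_opc[of psi "degree psi" z] by (simp add: cc_def)
next
  case (Suc j)
  let ?N = "degree psi"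
  define w1 where "w1 = (X ^^ Suc j) z"
  have "Y ((X ^^ Suc (Suc j)) z) = Y (X w1)" unfolding w1_def by simp
  also have "\<dots> = scale sigma (X (Y w1)) + opc (coeff psi) ?N w1"
    using relYX[of w1] op_poly_opc[of psi ?N w1] by simp
  also have "X (Y w1) = scale (sigma ^ Suc j) ((X ^^ Suc (Suc j)) (Y z)) + opc (\<lambda>i. cc (Suc j) i * inverse (rho ^ i)) ?N w1"
    unfolding w1_def Suc by (simp add: X.add X.scale X_opc)
  also have "scale sigma (scale (sigma ^ Suc j) ((X ^^ Suc (Suc j)) (Y z)) + opc (\<lambda>i. cc (Suc j) i * inverse (rho ^ i)) ?N w1) + opc (coeff psi) ?N w1
     = scale (sigma ^ Suc (Suc j)) ((X ^^ Suc (Suc j)) (Y z)) + (scale sigma (opc (\<lambda>i. cc (Suc j) i * inverse (rho ^ i)) ?N w1) + opc (coeff psi) ?N w1)"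
    by (simp add: scale_right_distrib)
  also have "scale sigma (opc (\<lambda>i. cc (Suc j) i * inverse (rho ^ i)) ?N w1) + opc (coeff psi) ?N w1
      = opc (\<lambda>i. sigma * (cc (Suc j) i * inverse (rho ^ i)) + coeff psi i) ?N w1"
    by (rule opc_lin[symmetric])
  also have "(\<lambda>i. sigma * (cc (Suc j) i * inverse (rho ^ i)) + coeff psi i) = cc (Suc (Suc j))"
  proof
    fix i
    let ?t = "sigma * inverse (rho ^ i)"
    have "(\<Sum>l<Suc (Suc j). ?t ^ l) = 1 + ?t * (\<Sum>l<Suc j. ?t ^ l)"
      by (subst sum.lessThan_Suc_shift) (simp add: sum_distrib_left del: sum.lessThan_Suc)
    then show "sigma * (cc (Suc j) i * inverse (rho ^ i)) + coeff psi i = cc (Suc (Suc j)) i"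
      unfolding cc_def by (simp only:) (simp add: algebra_simps del: sum.lessThan_Suc)
  qed
  finally show ?case unfolding w1_def by simp
qed

lemma exists_eigen:
  assumes nc: "\<exists>i. sigma = rho ^ i \<and> coeff psi i \<noteq> 0"
    and nil: "\<forall>x. (X ^^ k) x = 0" and nz: "\<exists>x::'m. x \<noteq> 0"
  shows "\<exists>v \<mu>. v \<noteq> 0 \<and> X v = 0 \<and> H v = scale \<mu> v"
proof -
  define k0 where "k0 = (LEAST k. \<forall>x. (X ^^ k) x = 0)"
  have k0: "\<forall>x. (X ^^ k0) x = 0" unfolding k0_def using nil by (rule LeastI)
  have "k0 \<noteq> 0"
  proof
    assume "k0 = 0" then show False using k0 nz by auto
  qed
  then obtain k' where kk: "k0 = Suc k'" by (cases k0) auto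
  have "\<not> (\<forall>x. (X ^^ k') x = 0)" using not_less_Least[of k' "\<lambda>k. \<forall>x. (X ^^ k) x = 0"] kk k0_def by auto
  then obtain z where wz: "(X ^^ k') z \<noteq> 0" by auto
  define w where "w = (X ^^ k') z"
  have Xw: "X w = 0" using k0 kk unfolding w_def by (metis comp_apply funpow.simps(2))
  let ?N = "degree psi"
  have "Y ((X ^^ Suc k') z) = scale (sigma ^ Suc k') ((X ^^ Suc k') (Y z)) + opc (cc (Suc k')) ?N w"
    unfolding w_def by (rule Yformula)
  then have opc0: "opc (cc k0) ?N w = 0" using k0 kk by (simp add: Y.zero)
  define Q where "Q = (\<Sum>i\<le>?N. monom (cc k0 i) i)"
  have cQ: "coeff Q i = (if i \<le> ?N then cc k0 i else 0)" for i
    unfolding Q_def by (simp add: coeff_sum coeff_monom)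
  have dQ: "degree Q \<le> ?N" by (rule degree_le) (simp add: cQ)
  have "op_poly scale Q H w = opc (coeff Q) ?N w" by (rule op_poly_opc[OF dQ])
  also have "\<dots> = opc (cc k0) ?N w" unfolding opc_def by (rule sum.cong) (auto simp: cQ)
  finally have QH: "op_poly scale Q H w = 0" using opc0 by simp
  obtain i0 where i0: "sigma = rho ^ i0" "coeff psi i0 \<noteq> 0" using nc by blast
  have "i0 \<le> ?N" using i0(2) by (simp add: le_degree)
  then have "coeff Q i0 = coeff psi i0 * of_nat k0"
    using rho0 unfolding cQ cc_def by (simp add: i0(1))
  then have "Q \<noteq> 0" using i0(2) \<open>k0 \<noteq> 0\<close> by auto
  then show ?thesis using eigen_exists[OF _ Xw _ QH] wz unfolding w_def by blast
qed

lemma lin_span_inv: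
  assumes "Vector_Spaces.linear scale scale f" and "f ` B \<subseteq> span B"
  shows "f ` span B \<subseteq> span B"
proof -
  interpret f: Vector_Spaces.linear scale scale f by (rule assms(1))
  have "f ` span B = span (f ` B)" by (simp add: f.span_image)
  also have "\<dots> \<subseteq> span (span B)" by (rule span_mono[OF assms(2)])
  finally show ?thesis by (simp add: span_span)
qed

lemma span_finite_sub: "x \<in> span S \<Longrightarrow> \<exists>T. finite T \<and> T \<subseteq> S \<and> x \<in> span T"
  unfolding span_explicit[of S]
proof safe
  fix t r assume "finite t" "t \<subseteq> S"
  moreover have "(\<Sum>a\<in>t. scale (r a) a) \<in> span t" by (intro span_sum span_scale span_base)
  ultimately show "\<exists>T. finite T \<and> T \<subseteq> S \<and> (\<Sum>a\<in>t. scale (r a) a) \<in> span T" by blast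
qed

lemma core:
  assumes simp: "\<forall>W. subspace W \<and> X ` W \<subseteq> W \<and> Y ` W \<subseteq> W \<and> H ` W \<subseteq> W \<longrightarrow> W = {0} \<or> W = UNIV"
    and nil: "\<forall>x. (X ^^ k) x = 0"
    and v0: "v \<noteq> 0" and Xv: "X v = 0" and Hv: "H v = scale \<mu> v"
  shows "\<exists>S. finite S \<and> span S = UNIV"
proof -
  define vv where "vv c = (Y ^^ c) v" for c
  have vvS: "vv (Suc c) = Y (vv c)" for c unfolding vv_def by simp
  have HY: "H (Y x) = scale (inverse rho) (Y (H x))" for x using relYH[of x] rho0 by simp
  have eig: "\<forall>c. \<exists>\<mu>. H (vv c) = scale \<mu> (vv c)"
  proof
    fix c show "\<exists>\<mu>. H (vv c) = scale \<mu> (vv c)"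
    proof (induction c)
      case 0 then show ?case using Hv unfolding vv_def by auto
    next
      case (Suc c)
      then obtain m where "H (vv c) = scale m (vv c)" by blast
      then have "H (vv (Suc c)) = scale (inverse rho * m) (vv (Suc c))"
        unfolding vvS HY by (simp add: Y.scale)
      then show ?case by blast
    qed
  qed
  have Hpe: "H x = scale m x \<Longrightarrow> (H ^^ i) x = scale (m ^ i) x" for x m i
    by (induction i) (auto simp: H.scale mult.commute)
  have ope: "H x = scale m x \<Longrightarrow> \<exists>a. op_poly scale psi H x = scale a x" for x m
    unfolding op_poly_def using Hpe[of x m] by (auto simp: scale_sum_left[symmetric])
  have XY: "X (Y x) = scale (inverse sigma) (Y (X x) - op_poly scale psi H x)" for x
    using relYX[of x] sigma0 by (simp add: scale_right_diff_distrib)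
  have "\<forall>c. \<exists>g. X (vv (Suc c)) = scale g (vv c)"
  proof
    fix c show "\<exists>g. X (vv (Suc c)) = scale g (vv c)"
    proof (induction c)
      case 0
      obtain a where "op_poly scale psi H v = scale a v" using ope[OF Hv] by blast
      then have "X (vv (Suc 0)) = scale (- inverse sigma * a) (vv 0)"
        unfolding vvS XY by (simp add: vv_def Xv Y.zero scale_minus_left)
      then show ?case by blast
    next
      case (Suc c)
      then obtain g where g: "X (vv (Suc c)) = scale g (vv c)" by blast
      obtain m where "H (vv (Suc c)) = scale m (vv (Suc c))" using eig by blast
      then obtain a where a: "op_poly scale psi H (vv (Suc c)) = scale a (vv (Suc c))" using ope by blast
      have "X (vv (Suc (Suc c))) = scale (inverse sigma * (g - a)) (vv (Suc c))"
        unfolding vvS[of "Suc c"] XY a g by (simp add: Y.scale vvS flip: scale_left_diff_distrib)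
      then show ?case by blast
    qed
  qed
  then obtain G where G: "\<And>c. X (vv (Suc c)) = scale (G c) (vv c)" by metis
  have Xpow: "(X ^^ j) (vv (t + j)) = scale (\<Prod>c\<in>{t..<t+j}. G c) (vv t)" for j t
  proof (induction j)
    case 0 then show ?case by simp
  next
    case (Suc j)
    have "(X ^^ Suc j) (vv (t + Suc j)) = (X ^^ j) (X (vv (Suc (t + j))))"
      by (simp add: funpow_Suc_right del: funpow.simps)
    also have "\<dots> = scale (G (t + j)) ((X ^^ j) (vv (t + j)))" by (simp add: G Xp_scale)
    also have "\<dots> = scale (\<Prod>c\<in>{t..<t + Suc j}. G c) (vv t)"
      using Suc by (simp add: prod.atLeastLessThan_Suc mult.commute)
    finally show ?case .
  qed
  have "scale (\<Prod>c\<in>{0..<k}. G c) v = 0" using Xpow[of k 0] nil by (simp add: vv_def)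
  then have "(\<Prod>c\<in>{0..<k}. G c) = 0" using v0 by simp
  then obtain m0 where Gm0: "G m0 = 0" by auto
  have inv: "subspace (span (vv ` {m..})) \<and> X ` span (vv ` {m..}) \<subseteq> span (vv ` {m..}) \<and>
      Y ` span (vv ` {m..}) \<subseteq> span (vv ` {m..}) \<and> H ` span (vv ` {m..}) \<subseteq> span (vv ` {m..})"
    if Xm: "X (vv m) = 0" for m
  proof (intro conjI)
    show "subspace (span (vv ` {m..}))" by simp
    show "X ` span (vv ` {m..}) \<subseteq> span (vv ` {m..})"
    proof (rule lin_span_inv[OF linX], rule image_subsetI)
      fix x assume "x \<in> vv ` {m..}"
      then obtain c where c: "c \<in> {m..}" and xc: "x = vv c" by blast
      show "X x \<in> span (vv ` {m..})"
      proof (cases "c = m")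
        case True then show ?thesis using Xm xc by (simp add: span_zero)
      next
        case False
        then obtain c' where "c = Suc c'" "c' \<ge> m" using c by (cases c) auto
        then show ?thesis using xc by (simp add: G) (rule span_scale, rule span_base, auto)
      qed
    qed
    show "Y ` span (vv ` {m..}) \<subseteq> span (vv ` {m..})"
      by (rule lin_span_inv[OF linY]) (auto simp: vvS[symmetric] intro!: span_base)
    show "H ` span (vv ` {m..}) \<subseteq> span (vv ` {m..})"
    proof (rule lin_span_inv[OF linH], rule image_subsetI)
      fix x assume "x \<in> vv ` {m..}"
      then obtain c where c: "c \<in> {m..}" and xc: "x = vv c" by blast
      obtain m' where "H (vv c) = scale m' (vv c)" using eig by blast
      then show "H x \<in> span (vv ` {m..})" unfolding xc using c by (simp) (rule span_scale, rule span_base, auto)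
    qed
  qed
  have Wsimp: "subspace W \<and> X ` W \<subseteq> W \<and> Y ` W \<subseteq> W \<and> H ` W \<subseteq> W \<Longrightarrow> W = {0} \<or> W = UNIV" for W
    using simp by blast
  have all: "span (vv ` {0..}) = UNIV"
  proof -
    have "v \<in> span (vv ` {0..})" by (rule span_base) (auto simp: vv_def image_iff intro: exI[of _ 0])
    then have "span (vv ` {0..}) \<noteq> {0}" using v0 by auto
    moreover have "X (vv 0) = 0" using Xv by (simp add: vv_def)
    ultimately show ?thesis using Wsimp[OF inv[of 0]] by blast
  qed
  have breakdown: "v \<in> span (vv ` {1..<n}) \<Longrightarrow> \<exists>N\<ge>1. vv N \<in> span (vv ` {..<N})" for n
  proof (induction n)
    case 0 then show ?case using v0 by simp
  next
    case (Suc n)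
    show ?case
    proof (cases "n = 0")
      case True then show ?thesis using Suc.prems v0 by simp
    next
      case False
      have e: "vv ` {1..<Suc n} = insert (vv n) (vv ` {1..<n})" using False by (auto simp: atLeastLessThanSuc)
      obtain a where a: "v - scale a (vv n) \<in> span (vv ` {1..<n})"
        using Suc.prems unfolding e span_breakdown_eq by blast
      show ?thesis
      proof (cases "a = 0")
        case True then show ?thesis using Suc.IH a by simp
      next
        case False
        have sub: "span (vv ` {1..<n}) \<subseteq> span (vv ` {..<n})" by (rule span_mono) auto
        have "v \<in> span (vv ` {..<n})" using \<open>n \<noteq> 0\<close> by (intro span_base) (auto simp: vv_def image_iff intro: bexI[of _ 0])
        then have "v - (v - scale a (vv n)) \<in> span (vv ` {..<n})" using a sub by (meson span_diff subsetD)
        then have "scale a (vv n) \<in> span (vv ` {..<n})" by simp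
        then have "scale (inverse a) (scale a (vv n)) \<in> span (vv ` {..<n})" by (rule span_scale)
        then have "vv n \<in> span (vv ` {..<n})" using False by simp
        then show ?thesis using \<open>n \<noteq> 0\<close> by (intro exI[of _ n]) auto
      qed
    qed
  qed
  have "\<exists>N\<ge>1. vv N \<in> span (vv ` {..<N})"
  proof -
    have Xm: "X (vv (Suc m0)) = 0" using G[of m0] Gm0 by simp
    have "span (vv ` {Suc m0..}) = {0} \<or> span (vv ` {Suc m0..}) = UNIV" by (rule Wsimp[OF inv[OF Xm]])
    then show ?thesis
    proof
      assume "span (vv ` {Suc m0..}) = {0}"
      then have "vv (Suc m0) = 0" using span_base[of "vv (Suc m0)" "vv ` {Suc m0..}"] by auto
      then show ?thesis by (intro exI[of _ "Suc m0"]) (auto simp: span_zero)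
    next
      assume "span (vv ` {Suc m0..}) = UNIV"
      then have "v \<in> span (vv ` {Suc m0..})" by simp
      then obtain T where T: "finite T" "T \<subseteq> vv ` {Suc m0..}" "v \<in> span T" using span_finite_sub by blast
      then obtain I where I: "I \<subseteq> {Suc m0..}" "finite I" "T = vv ` I" by (meson finite_subset_image)
      obtain n where "I \<subseteq> {..<n}" using finite_nat_bounded[OF I(2)] by blast
      then have "I \<subseteq> {1..<n}" using I(1) by fastforce
      then have "T \<subseteq> vv ` {1..<n}" using I(3) by blast
      then have "v \<in> span (vv ` {1..<n})" using T(3) span_mono by blast
      then show ?thesis by (rule breakdown)
    qed
  qed
  then obtain N where N: "N \<ge> 1" "vv N \<in> span (vv ` {..<N})" by blast
  have Yinv: "Y ` span (vv ` {..<N}) \<subseteq> span (vv ` {..<N})"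
  proof (rule lin_span_inv[OF linY], rule image_subsetI)
    fix x assume "x \<in> vv ` {..<N}"
    then obtain c where "c \<in> {..<N}" and xc: "x = vv c" by blast
    then show "Y x \<in> span (vv ` {..<N})" unfolding xc
      using N(2) by (cases "Suc c = N") (auto simp: vvS[symmetric] intro!: span_base)
  qed
  have allin: "vv c \<in> span (vv ` {..<N})" for c
  proof (induction c)
    case 0 then show ?case using N(1) by (intro span_base) auto
  next
    case (Suc c) then show ?case using Yinv unfolding vvS by blast
  qed
  have "span (vv ` {0..}) \<subseteq> span (vv ` {..<N})"
    by (rule span_minimal) (use allin in auto)
  then have "span (vv ` {..<N}) = UNIV" using all by auto
  then show ?thesis by blast
qed

lemma fin:
  assumes nc: "\<exists>i. sigma = rho ^ i \<and> coeff psi i \<noteq> 0"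
    and simp: "\<forall>W. subspace W \<and> X ` W \<subseteq> W \<and> Y ` W \<subseteq> W \<and> H ` W \<subseteq> W \<longrightarrow> W = {0} \<or> W = UNIV"
    and nil: "\<forall>x. (X ^^ k) x = 0" and nz: "\<exists>x::'m. x \<noteq> 0"
  shows "\<exists>S. finite S \<and> span S = UNIV"
proof -
  obtain v \<mu> where "v \<noteq> 0" "X v = 0" "H v = scale \<mu> v" using exists_eigen[OF nc nil nz] by blast
  then show ?thesis using core[OF simp nil] by blast
qed

end

lemma op_poly_smult_gen:
  assumes "vector_space scale" "c \<noteq> 0"
  shows "op_poly scale (smult c p) H x = scale c (op_poly scale p H x)"
proof -
  interpret vector_space scale by (rule assms(1))
  show ?thesis unfolding op_poly_def using assms(2)
    by (simp add: degree_smult_eq scale_sum_right)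
qed

lemma nonconf:
  assumes "\<not> conformal phi r s"
  shows "\<exists>i. s = r ^ i \<and> coeff phi i \<noteq> 0"
proof (rule ccontr)
  assume A: "\<not> ?thesis"
  define psi where "psi = (\<Sum>i\<le>degree phi. monom (coeff phi i / (s - r ^ i)) i)"
  have cp: "coeff psi i = (if i \<le> degree phi then coeff phi i / (s - r ^ i) else 0)" for i
    unfolding psi_def by (simp add: coeff_sum coeff_monom)
  have "smult s psi - psi \<circ>\<^sub>p [:0, r:] = phi"
  proof (rule poly_eqI)
    fix i
    show "coeff (smult s psi - psi \<circ>\<^sub>p [:0, r:]) i = coeff phi i"
    proof (cases "i \<le> degree phi")
      case True
      show ?thesis
      proof (cases "s = r ^ i")
        case True
        then show ?thesis using A by (auto simp: coeff_pcompose_linear cp)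
      next
        case False
        then have "s - r ^ i \<noteq> 0" by simp
        have "s * (coeff phi i / (s - r ^ i)) - r ^ i * (coeff phi i / (s - r ^ i)) = (s - r ^ i) * (coeff phi i / (s - r ^ i))"
          by (rule left_diff_distrib[symmetric])
        also have "\<dots> = coeff phi i" using \<open>s - r ^ i \<noteq> 0\<close> by simp
        finally show ?thesis using \<open>i \<le> degree phi\<close>
          by (simp add: coeff_pcompose_linear cp)
      qed
    next
      case False
      then show ?thesis by (simp add: coeff_pcompose_linear cp coeff_eq_0)
    qed
  qed
  then show False using assms unfolding conformal_def by blast
qed

theorem mainTheorem19:
  fixes scale :: "complex \<Rightarrow> 'm \<Rightarrow> 'm::ab_group_add"
    and phi :: "complex poly" and r s :: complex
    and U D H :: "'m \<Rightarrow> 'm"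
  assumes "r \<noteq> 0" and "s \<noteq> 0"
    and "\<not> conformal phi r s"
    and "is_simple_L_module scale phi r s U D H"
    and "\<forall>n j. mult_order_is r n \<and> j < n \<and> s = r ^ j \<longrightarrow>
           (\<exists>c. c \<noteq> 0 \<and> (\<forall>x. op_poly scale (phitilde phi s n j) (H ^^ n) x = scale c x))"
    and "(\<exists>k. \<forall>x. (U ^^ k) x = 0) \<or> (\<exists>k. \<forall>x. (D ^^ k) x = 0)"
  shows "fin_dim scale"
proof -
  note M = assms(4)[unfolded is_simple_L_module_def is_L_module_def]
  have vs: "vector_space scale" using M by blast
  interpret vector_space scale by (rule vs)
  have lU: "Vector_Spaces.linear scale scale U" and lD: "Vector_Spaces.linear scale scale D"
    and lH: "Vector_Spaces.linear scale scale H" using M by blast+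
  have r1: "H (U x) = scale r (U (H x))" for x using M by blast
  have r2: "D (H x) = scale r (H (D x))" for x using M by blast
  have r3: "D (U x) - scale s (U (D x)) = op_poly scale phi H x" for x using M by blast
  have nz: "\<exists>x::'m. x \<noteq> 0" using M by blast
  have simpl: "\<forall>W. subspace W \<and> U ` W \<subseteq> W \<and> D ` W \<subseteq> W \<and> H ` W \<subseteq> W \<longrightarrow> W = {0} \<or> W = UNIV"
    using M by blast
  obtain i where i: "s = r ^ i" "coeff phi i \<noteq> 0" using nonconf[OF assms(3)] by blast
  from assms(6) show ?thesis
  proof
    assume "\<exists>k. \<forall>x. (U ^^ k) x = 0"
    then obtain k where k: "\<forall>x. (U ^^ k) x = 0" by blast
    have "Lgen scale U D H r s phi"
      unfolding Lgen_def Lgen_axioms_def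
    proof (intro conjI allI vs lU lD lH r1 r2 assms(1,2))
      show "D (U x) = scale s (U (D x)) + op_poly scale phi H x" for x using r3[of x] by (simp add: algebra_simps)
    qed
    then interpret G: Lgen scale U D H r s phi .
    have "\<exists>S. finite S \<and> span S = UNIV"
      by (rule G.fin[OF _ _ k nz]) (use i simpl in blast)+
    then show ?thesis unfolding fin_dim_def .
  next
    assume "\<exists>k. \<forall>x. (D ^^ k) x = 0"
    then obtain k where k: "\<forall>x. (D ^^ k) x = 0" by blast
    have "Lgen scale D U H (inverse r) (inverse s) (smult (- inverse s) phi)"
      unfolding Lgen_def Lgen_axioms_def
    proof (intro conjI allI vs lU lD lH)
      show "H (D x) = scale (inverse r) (D (H x))" for x using r2[of x] assms(1) by simp
      show "U (H x) = scale (inverse r) (H (U x))" for x using r1[of x] assms(1) by simp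
      show "U (D x) = scale (inverse s) (D (U x)) + op_poly scale (smult (- inverse s) phi) H x" for x
      proof -
        have "op_poly scale (smult (- inverse s) phi) H x = scale (- inverse s) (op_poly scale phi H x)"
          by (rule op_poly_smult_gen[OF vs]) (use assms(2) in simp)
        also have "\<dots> = scale (- inverse s) (D (U x)) + U (D x)"
          unfolding r3[symmetric] using assms(2) by (simp add: algebra_simps)
        finally show ?thesis by (simp add: scale_minus_left)
      qed
    qed (use assms(1,2) in auto)
    then interpret G: Lgen scale D U H "inverse r" "inverse s" "smult (- inverse s) phi" .
    have "\<exists>S. finite S \<and> span S = UNIV"
    proof (rule G.fin[OF _ _ k nz])
      show "\<exists>i. inverse s = inverse r ^ i \<and> coeff (smult (- inverse s) phi) i \<noteq> 0"
        using i assms(2) by (auto simp: power_inverse)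
    qed (use simpl in blast)
    then show ?thesis unfolding fin_dim_def .
  qed
qed
end
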